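(* Let $(\Omega,\mathcal{F},\mathbb{P})$ be a nonatomic probability space, let $\mathbb{Q}$ be a probability measure on $(\Omega,\mathcal{F})$ absolutely continuous with respect to $\mathbb{P}$, and let $\mathcal{A}_\mathbb{Q}^\infty=\{X\in L^\infty:\mathbb{E}[XY]\ge0\text{ for all }Y\sim\frac{d\mathbb{Q}}{d\mathbb{P}}\}$. Let $S=(S_0,S_T)$ be a traded asset with $S_T\in L^\infty$. Then $\rho_{\mathcal{A}_\mathbb{Q}^\infty,S}$ is finite-valued (hence continuous) on $L^\infty$ if and only if $\inf_{Z\sim S_T}\mathbb{E}_\mathbb{Q}[Z]>0$.
   Context: $Y\sim Z$ means $Y$ and $Z$ (random variables on $\Omega$) have the same law under $\mathbb{P}$. A traded asset is $S=(S_0,S_T)$ with $S_0>0$, $S_T\ge0$ a.s., $S_T\ne0$. For $\mathcal{B}\subset L^\infty$, $\rho_{\mathcal{B},S}(X)=\inf\{m\in\mathbb{R}:X+\frac{m}{S_0}S_T\in\mathcal{B}\}$. *)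

theory Defs
  imports "HOL-Probability.Probability"
begin

definition nonatomic :: "'a measure \<Rightarrow> bool" where
  "nonatomic M \<longleftrightarrow> (\<forall>A\<in>sets M. measure M A > 0 \<longrightarrow>
      (\<exists>B\<in>sets M. B \<subseteq> A \<and> 0 < measure M B \<and> measure M B < measure M A))"

definition Linf :: "'a measure \<Rightarrow> ('a \<Rightarrow> real) set" where
  "Linf M = {X. X \<in> borel_measurable M \<and> (\<exists>C. AE x in M. \<bar>X x\<bar> \<le> C)}"

definition same_law :: "'a measure \<Rightarrow> ('a \<Rightarrow> real) \<Rightarrow> ('a \<Rightarrow> real) \<Rightarrow> bool" where
  "same_law M Y Z \<longleftrightarrow> Y \<in> borel_measurable M \<and> Z \<in> borel_measurable M \<and>
      distr M borel Y = distr M borel Z"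

definition dens :: "'a measure \<Rightarrow> 'a measure \<Rightarrow> 'a \<Rightarrow> real" where
  "dens M Q = (\<lambda>x. enn2real (RN_deriv M Q x))"

definition accQ :: "'a measure \<Rightarrow> 'a measure \<Rightarrow> ('a \<Rightarrow> real) set" where
  "accQ M Q = {X \<in> Linf M. \<forall>Y. same_law M Y (dens M Q) \<longrightarrow>
       0 \<le> integral\<^sup>L M (\<lambda>x. X x * Y x)}"

definition traded_asset :: "'a measure \<Rightarrow> real \<Rightarrow> ('a \<Rightarrow> real) \<Rightarrow> bool" where
  "traded_asset M S0 ST \<longleftrightarrow> S0 > 0 \<and> ST \<in> borel_measurable M \<and>
      (AE x in M. ST x \<ge> 0) \<and> \<not> (AE x in M. ST x = 0)"

text \<open>Risk measure rho_{B,S}(X) = inf {m. X + m/S0 * ST \<in> B}, valued in the extended reals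
  (inf of the empty set is +infinity).\<close>
definition rho :: "('a \<Rightarrow> real) set \<Rightarrow> real \<Rightarrow> ('a \<Rightarrow> real) \<Rightarrow> ('a \<Rightarrow> real) \<Rightarrow> ereal" where
  "rho B S0 ST X = Inf (ereal ` {m. (\<lambda>x. X x + m / S0 * ST x) \<in> B})"

end

theory Submission
  imports Defs
begin

context prob_space begin

lemma small_subset_aux:
  assumes na: "nonatomic M"
  shows "A \<in> sets M \<Longrightarrow> measure M A > 0 \<Longrightarrow>
     \<exists>C\<in>sets M. C \<subseteq> A \<and> 0 < measure M C \<and> measure M C \<le> measure M A / 2^n"
proof (induction n arbitrary: A)
  case 0
  then show ?case by auto
next
  case (Suc n)
  from na Suc.prems obtain B where B: "B \<in> sets M" "B \<subseteq> A" "0 < measure M B" "measure M B < measure M A"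
    unfolding nonatomic_def by blast
  have dif: "measure M (A - B) = measure M A - measure M B"
    using B Suc.prems by (simp add: finite_measure_Diff)
  obtain C0 where C0: "C0 \<in> sets M" "C0 \<subseteq> A" "0 < measure M C0" "measure M C0 \<le> measure M A / 2"
  proof (cases "measure M B \<le> measure M A / 2")
    case True then show ?thesis using B that by blast
  next
    case False
    show ?thesis using that[of "A - B"] B Suc.prems dif False by auto
  qed
  from Suc.IH[OF C0(1) C0(3)] obtain C where C: "C\<in>sets M" "C \<subseteq> C0" "0 < measure M C" "measure M C \<le> measure M C0 / 2^n"
    by blast
  have "measure M C0 / 2^n \<le> (measure M A / 2) / 2^n"
    using C0(4) by (intro divide_right_mono) auto
  also have "\<dots> = measure M A / 2^(Suc n)" by simp
  finally show ?case using C C0 by (intro bexI[of _ C]) auto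
qed

lemma small_subset:
  assumes na: "nonatomic M" and A: "A \<in> sets M" "measure M A > 0" and e: "e > 0"
  shows "\<exists>C\<in>sets M. C \<subseteq> A \<and> 0 < measure M C \<and> measure M C < e"
proof -
  obtain n where n: "1 / e < 2 ^ n" using real_arch_pow[of 2 "1/e"] by auto
  from small_subset_aux[OF na A] obtain C where C: "C\<in>sets M" "C \<subseteq> A" "0 < measure M C" "measure M C \<le> measure M A / 2^n"
    by blast
  have "measure M A / 2^n \<le> 1 / 2^n" by (simp add: divide_right_mono)
  also have "\<dots> < e" using n e by (simp add: field_simps)
  finally show ?thesis using C by auto
qed

lemma sierpinski:
  assumes na: "nonatomic M" and A: "A \<in> sets M" and t: "0 \<le> t" "t \<le> measure M A"
  shows "\<exists>B\<in>sets M. B \<subseteq> A \<and> measure M B = t"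
proof -
  define cand where "cand B = {measure M C | C. C \<in> sets M \<and> C \<subseteq> A - B \<and> measure M C \<le> t - measure M B}" for B
  define s where "s B = Sup (cand B)" for B
  define nxt where "nxt B = B \<union> (SOME C. C \<in> sets M \<and> C \<subseteq> A - B \<and> measure M C \<le> t - measure M B \<and> s B \<le> 2 * measure M C)" for B
  define inv where "inv B \<longleftrightarrow> B \<in> sets M \<and> B \<subseteq> A \<and> measure M B \<le> t" for B
  have bdd: "bdd_above (cand B)" for B unfolding cand_def by (auto intro!: bdd_aboveI[of _ 1])
  have ex: "\<exists>C. C \<in> sets M \<and> C \<subseteq> A - B \<and> measure M C \<le> t - measure M B \<and> s B \<le> 2 * measure M C" if "inv B" for B
  proof -
    have ne: "0 \<in> cand B" using that unfolding cand_def inv_def by (auto intro!: exI[of _ "{}"])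
    show ?thesis
    proof (cases "s B \<le> 0")
      case True then show ?thesis using that unfolding inv_def by (intro exI[of _ "{}"]) auto
    next
      case False
      then have "s B / 2 < Sup (cand B)" by (simp add: s_def)
      then obtain x where "x \<in> cand B" "s B / 2 < x" using less_cSup_iff[OF _ bdd] ne by blast
      then show ?thesis unfolding cand_def by fastforce
    qed
  qed
  have nxt: "inv (nxt B) \<and> B \<subseteq> nxt B \<and> measure M (nxt B) = measure M B + measure M (nxt B - B) \<and> s B \<le> 2 * measure M (nxt B - B)" if iB: "inv B" for B
  proof -
    obtain C where C: "C \<in> sets M" "C \<subseteq> A - B" "measure M C \<le> t - measure M B" "s B \<le> 2 * measure M C" and eq: "nxt B = B \<union> C"
      using someI_ex[OF ex[OF iB]] unfolding nxt_def by blast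
    have d: "nxt B - B = C" using eq C by auto
    have "measure M (B \<union> C) = measure M B + measure M C" using C iB unfolding inv_def by (intro finite_measure_Union) auto
    then show ?thesis using C iB d eq unfolding inv_def by auto
  qed
  define Bs where "Bs n = (nxt ^^ n) {}" for n
  have inv: "inv (Bs n)" for n
  proof (induction n)
    case 0 then show ?case by (auto simp: Bs_def inv_def t)
  next
    case (Suc n) then show ?case using nxt[OF Suc] by (simp add: Bs_def)
  qed
  have BsS: "Bs (Suc n) = nxt (Bs n)" for n by (simp add: Bs_def)
  have inc: "incseq Bs" using inv nxt by (intro incseq_SucI) (auto simp: BsS)
  have rng: "range Bs \<subseteq> sets M" using inv by (auto simp: inv_def)
  let ?B = "\<Union>n. Bs n"
  have Bsets: "?B \<in> sets M" using rng by auto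
  have BA: "?B \<subseteq> A" using inv by (auto simp: inv_def)
  have lim: "(\<lambda>n. measure M (Bs n)) \<longlonglongrightarrow> measure M ?B"
    using rng inc by (intro Lim_measure_incseq) auto
  have Ble: "measure M ?B \<le> t"
    using inv by (intro LIMSEQ_le_const2[OF lim]) (auto simp: inv_def)
  have "(\<lambda>n. measure M (Bs (Suc n)) - measure M (Bs n)) \<longlonglongrightarrow> measure M ?B - measure M ?B"
    by (intro tendsto_diff lim LIMSEQ_Suc[OF lim])
  then have dlim: "(\<lambda>n. measure M (Bs (Suc n) - Bs n)) \<longlonglongrightarrow> 0"
    using nxt[OF inv] by (simp add: BsS)
  have sle: "s (Bs n) \<le> 2 * measure M (Bs (Suc n) - Bs n)" for n
    using nxt[OF inv] by (simp add: BsS)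
  have "\<not> measure M ?B < t"
  proof
    assume lt: "measure M ?B < t"
    have "measure M (A - ?B) = measure M A - measure M ?B" using A Bsets BA by (simp add: finite_measure_Diff)
    then have pos: "measure M (A - ?B) > 0" using lt t by auto
    obtain C where C: "C \<in> sets M" "C \<subseteq> A - ?B" "0 < measure M C" "measure M C < t - measure M ?B"
      using small_subset[OF na _ pos, of "t - measure M ?B"] lt A Bsets by auto
    have Cle: "measure M C \<le> s (Bs n)" for n
    proof -
      have "measure M (Bs n) \<le> measure M ?B" using Bsets by (intro finite_measure_mono) auto
      then have "measure M C \<in> cand (Bs n)" unfolding cand_def using C by (intro CollectI exI[of _ C]) auto
      then show ?thesis unfolding s_def by (intro cSup_upper bdd)
    qed
    have "eventually (\<lambda>n. measure M (Bs (Suc n) - Bs n) < measure M C / 2) sequentially"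
      using C(3) by (intro order_tendstoD(2)[OF dlim]) auto
    then obtain n where "measure M (Bs (Suc n) - Bs n) < measure M C / 2"
      by (auto simp: eventually_sequentially)
    then show False using sle[of n] Cle[of n] by linarith
  qed
  then show ?thesis using Ble Bsets BA by (intro bexI[of _ ?B]) auto
qed

end

primrec cells :: "('a set \<Rightarrow> 'a set) \<Rightarrow> 'a set \<Rightarrow> nat \<Rightarrow> nat \<Rightarrow> 'a set" where
  "cells H A 0 k = (if k = 0 then A else {})"
| "cells H A (Suc n) k = (if even k then H (cells H A n (k div 2))
      else cells H A n (k div 2) - H (cells H A n (k div 2)))"

context prob_space begin

context
  fixes H and A
  assumes H: "\<And>C. C \<in> sets M \<Longrightarrow> H C \<in> sets M \<and> H C \<subseteq> C \<and> measure M (H C) = measure M C / 2"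
    and A: "A \<in> sets M"
begin

lemma cells_sets: "cells H A n k \<in> sets M"
  by (induction n arbitrary: k) (auto simp: A H)

lemma cells_sub: "cells H A (Suc n) k \<subseteq> cells H A n (k div 2)"
  using H[OF cells_sets[of n "k div 2"]] by auto

lemma cells_A: "cells H A n k \<subseteq> A"
proof (induction n arbitrary: k)
  case 0 then show ?case by auto
next
  case (Suc n) then show ?case using cells_sub[of n k] by blast
qed

lemma cells_measure: "k < 2^n \<Longrightarrow> measure M (cells H A n k) = measure M A / 2^n"
proof (induction n arbitrary: k)
  case 0 then show ?case by auto
next
  case (Suc n)
  let ?c = "cells H A n (k div 2)"
  have k2: "k div 2 < 2^n" using Suc.prems by auto
  have h: "measure M (H ?c) = measure M ?c / 2" "H ?c \<subseteq> ?c" "H ?c \<in> sets M"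
    using H[OF cells_sets] by auto
  have d: "measure M (?c - H ?c) = measure M ?c - measure M (H ?c)"
    using h cells_sets by (intro finite_measure_Diff) auto
  show ?case using Suc.IH[OF k2] h d by auto
qed

lemma cells_disj: "j \<noteq> k \<Longrightarrow> cells H A n j \<inter> cells H A n k = {}"
proof (induction n arbitrary: j k)
  case 0 then show ?case by auto
next
  case (Suc n)
  show ?case
  proof (cases "j div 2 = k div 2")
    case False
    then show ?thesis using Suc.IH[OF False] cells_sub[of n j] cells_sub[of n k] by blast
  next
    case True
    then have "even j \<noteq> even k" using Suc.prems by (metis dvd_mult_div_cancel odd_two_times_div_two_succ)
    then show ?thesis using True by auto
  qed
qed

lemma cells_cover: "x \<in> A \<Longrightarrow> \<exists>k<2^n. x \<in> cells H A n k"
proof (induction n)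
  case 0 then show ?case by auto
next
  case (Suc n)
  then obtain k where k: "k < 2^n" "x \<in> cells H A n k" by auto
  show ?case
  proof (cases "x \<in> H (cells H A n k)")
    case True
    then show ?thesis using k by (intro exI[of _ "2*k"]) auto
  next
    case False
    then show ?thesis using k by (intro exI[of _ "2*k+1"]) auto
  qed
qed

definition L :: "nat \<Rightarrow> 'a \<Rightarrow> real" where
  "L n x = (\<Sum>k<2^n. real k * indicator (cells H A n k) x) / 2^n"

lemma L_meas: "L n \<in> borel_measurable M"
  unfolding L_def using cells_sets by measurable

lemma L_val: assumes "x \<in> cells H A n k0" "k0 < 2^n" shows "L n x = real k0 / 2^n"
proof -
  have "\<And>k. k \<in> {..<2^n} \<Longrightarrow> real k * indicator (cells H A n k) x = (if k = k0 then real k0 else 0)"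
    using assms cells_disj[of _ k0 n] by (auto simp: indicator_def)
  then have "(\<Sum>k<2^n. real k * indicator (cells H A n k) x) = (\<Sum>k<2^n. if k = k0 then real k0 else 0)"
    by (rule sum.cong[OF refl])
  also have "\<dots> = real k0" using assms by (simp add: sum.delta)
  finally show ?thesis by (simp add: L_def)
qed

lemma L_out: assumes "x \<notin> A" shows "L n x = 0"
proof -
  have "\<And>k. indicator (cells H A n k) x = (0::real)" using assms cells_A by (auto simp: indicator_def)
  then show ?thesis by (simp add: L_def)
qed

lemma L_bounds: "0 \<le> L n x \<and> L n x \<le> 1 - 1/2^n"
proof (cases "x \<in> A")
  case True
  then obtain k where k: "k<2^n" "x \<in> cells H A n k" using cells_cover by blast
  then have "real k + 1 \<le> 2^n" by (metis of_nat_1 of_nat_add of_nat_le_iff of_nat_numeral of_nat_power Suc_leI Suc_eq_plus1)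
  then have "real k / 2^n \<le> 1 - 1/2^n" by (simp add: field_simps)
  then show ?thesis using L_val[OF k(2,1)] by auto
next
  case False then show ?thesis by (simp add: L_out field_simps)
qed

lemma L_step: "L n x \<le> L (Suc n) x \<and> L (Suc n) x \<le> L n x + 1 / 2^Suc n"
proof (cases "x \<in> A")
  case True
  then obtain k where k: "k<2^Suc n" "x \<in> cells H A (Suc n) k" using cells_cover by blast
  have k2: "k div 2 < 2^n" "x \<in> cells H A n (k div 2)" using k cells_sub by auto
  have a: "real (k div 2) * 2 \<le> real k" "real k \<le> real (k div 2) * 2 + 1"
    by (simp_all add: of_nat_mult[symmetric] del: of_nat_mult)
  have e: "L n x = (real (k div 2) * 2) / 2^Suc n" and e2: "L (Suc n) x = real k / 2^Suc n"
    using L_val k k2 by auto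
  have 1: "L n x \<le> L (Suc n) x" unfolding e e2 by (intro divide_right_mono) (use a in auto)
  have "L (Suc n) x \<le> (real (k div 2) * 2 + 1) / 2^Suc n" unfolding e2 by (intro divide_right_mono) (use a in auto)
  also have "\<dots> = L n x + 1 / 2^Suc n" unfolding e by (simp add: add_divide_distrib)
  finally show ?thesis using 1 by auto
next
  case False then show ?thesis by (simp add: L_out)
qed

lemma L_mono: "m \<le> n \<Longrightarrow> L m x \<le> L n x"
  by (induction n rule: dec_induct) (auto intro: order_trans L_step[THEN conjunct1])

lemma L_up: "n \<le> m \<Longrightarrow> L m x \<le> L n x + 1/2^n - 1/2^m"
proof (induction m rule: dec_induct)
  case base then show ?case by simp
next
  case (step m)
  have "1/(2::real)^m = 2 * (1/2^Suc m)" by simp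
  then show ?case using L_step[of m x] step by linarith
qed

lemma L_le: "L m x \<le> L n x + 1/2^n"
proof (cases "m \<le> n")
  case True then show ?thesis using L_mono[OF True, of x] by (simp add: add_increasing2)
next
  case False
  have "0 \<le> 1/(2::real)^m" by simp
  then show ?thesis using L_up[of n m x] False by linarith
qed

definition U :: "'a \<Rightarrow> real" where "U x = (SUP n. L n x)"

lemma L_bdd: "bdd_above (range (\<lambda>n. L n x))"
  using L_bounds by (intro bdd_aboveI[of _ 1]) (auto, smt (verit) divide_pos_pos zero_less_power)

lemma U_meas: "U \<in> borel_measurable M"
  unfolding U_def using L_meas L_bdd by (intro borel_measurable_cSUP) auto

lemma U_ge: "L n x \<le> U x"
  unfolding U_def using L_bdd by (intro cSUP_upper) auto

lemma U_le: "U x \<le> L n x + 1/2^n"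
  unfolding U_def using L_le by (intro cSUP_least) auto

lemma U_01: "0 \<le> U x \<and> U x \<le> 1"
proof
  show "0 \<le> U x" using U_ge[of 0 x] L_bounds[of 0 x] by linarith
  show "U x \<le> 1" unfolding U_def using L_bounds by (intro cSUP_least) (auto, smt (verit) divide_pos_pos zero_less_power)
qed

lemma L_set: "{x\<in>A. P (L n x)} = (\<Union>k\<in>{k. k<2^n \<and> P (real k / 2^n)}. cells H A n k)"
proof (intro equalityI subsetI)
  fix x assume "x \<in> {x\<in>A. P (L n x)}"
  then obtain k where "k<2^n" "x \<in> cells H A n k" "P (L n x)" using cells_cover by blast
  then show "x \<in> (\<Union>k\<in>{k. k<2^n \<and> P (real k / 2^n)}. cells H A n k)" using L_val by auto
next
  fix x assume "x \<in> (\<Union>k\<in>{k. k<2^n \<and> P (real k / 2^n)}. cells H A n k)"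
  then show "x \<in> {x\<in>A. P (L n x)}" using L_val cells_A by fastforce
qed

lemma L_set_measure: "measure M {x\<in>A. P (L n x)} = card {k. k<2^n \<and> P (real k / 2^n)} * (measure M A / 2^n)"
proof -
  have "measure M {x\<in>A. P (L n x)} = (\<Sum>k\<in>{k. k<2^n \<and> P (real k / 2^n)}. measure M (cells H A n k))"
    unfolding L_set using cells_sets cells_disj
    by (intro finite_measure_finite_Union) (auto simp: disjoint_family_on_def)
  also have "\<dots> = (\<Sum>k\<in>{k. k<2^n \<and> P (real k / 2^n)}. measure M A / 2^n)"
    using cells_measure by (intro sum.cong) auto
  finally show ?thesis by simp
qed

lemma U_measure: assumes t: "0 \<le> t" "t \<le> 1" shows "measure M {x\<in>A. U x \<le> t} = t * measure M A"
proof -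
  let ?P = "measure M {x\<in>A. U x \<le> t}" and ?a = "measure M A"
  have Us: "{x\<in>A. U x \<le> t} \<in> sets M" using U_meas A by measurable
  have bnd: "\<bar>?P - t * ?a\<bar> \<le> 1/2^n" for n
  proof -
    define f where "f = nat \<lfloor>t * 2^n\<rfloor>"
    have fe: "real f = real_of_int \<lfloor>t * 2^n\<rfloor>" unfolding f_def using t by simp
    have f1: "real f \<le> t * 2^n" "t * 2^n - 1 < real f" using fe floor_correct[of "t*2^n"] by linarith+
    have Ls: "{x\<in>A. L n x \<le> t} \<in> sets M" using L_meas A by measurable
    have "?P \<le> measure M {x\<in>A. L n x \<le> t}"
      using U_ge[of n] by (intro finite_measure_mono Ls) (auto intro: order_trans)
    also have "\<dots> = card {k. k<2^n \<and> real k / 2^n \<le> t} * (?a / 2^n)" by (rule L_set_measure)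
    also have "\<dots> \<le> (t * 2^n + 1) * (?a / 2^n)"
    proof (intro mult_right_mono)
      have "{k. k<2^n \<and> real k / 2^n \<le> t} \<subseteq> {..f}"
        unfolding f_def by (auto intro!: le_nat_floor simp: field_simps)
      then have "card {k. k<2^n \<and> real k / 2^n \<le> t} \<le> f + 1" using card_mono[of "{..f}"] by fastforce
      then show "real (card {k. k<2^n \<and> real k / 2^n \<le> t}) \<le> t * 2^n + 1" using f1
        by (smt (verit) of_nat_1 of_nat_add of_nat_le_iff)
    qed simp
    also have "\<dots> = t * ?a + ?a / 2^n" by (simp add: field_simps)
    finally have up: "?P \<le> t * ?a + ?a / 2^n" .
    have "card {k. k<2^n \<and> real k / 2^n + 1/2^n \<le> t} * (?a / 2^n) = measure M {x\<in>A. L n x + 1/2^n \<le> t}"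
      by (rule L_set_measure[symmetric])
    also have "\<dots> \<le> ?P"
      using U_le[of _ n] by (intro finite_measure_mono Us) (auto intro: order_trans)
    finally have lo1: "card {k. k<2^n \<and> real k / 2^n + 1/2^n \<le> t} * (?a / 2^n) \<le> ?P" .
    have "{..<f} \<subseteq> {k. k<2^n \<and> real k / 2^n + 1/2^n \<le> t}"
    proof
      fix k assume "k \<in> {..<f}"
      then have "real k + 1 \<le> real f" by (simp add: Suc_leI flip: of_nat_Suc)
      then have k1: "real k + 1 \<le> t * 2^n" using f1 by linarith
      moreover have "t * 2^n \<le> 2^n" using t by simp
      ultimately have "real k < 2^n" by linarith
      then have "k < 2^n" by (metis of_nat_less_iff of_nat_numeral of_nat_power)
      moreover have "real k / 2^n + 1/2^n \<le> t" using k1 by (simp add: field_simps)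
      ultimately show "k \<in> {k. k<2^n \<and> real k / 2^n + 1/2^n \<le> t}" by auto
    qed
    then have "f \<le> card {k. k<2^n \<and> real k / 2^n + 1/2^n \<le> t}"
      using card_mono[of "{k. k<2^n \<and> real k / 2^n + 1/2^n \<le> t}" "{..<f}"] by auto
    then have "(t * 2^n - 1) * (?a / 2^n) \<le> card {k. k<2^n \<and> real k / 2^n + 1/2^n \<le> t} * (?a / 2^n)"
      using f1 by (intro mult_right_mono) auto
    moreover have "(t * 2^n - 1) * (?a / 2^n) = t * ?a - ?a / 2^n" by (simp add: field_simps)
    ultimately have lo: "t * ?a - ?a / 2^n \<le> ?P" using lo1 by linarith
    have "?a / 2^n \<le> 1 / 2^n" by (intro divide_right_mono) auto
    then show ?thesis using up lo by auto
  qed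
  show ?thesis
  proof (rule ccontr)
    assume ne: "?P \<noteq> t * ?a"
    obtain n where n: "1 / \<bar>?P - t * ?a\<bar> < 2 ^ n" using real_arch_pow[of 2] by auto
    then have "1 / 2^n < \<bar>?P - t * ?a\<bar>" using ne by (simp add: field_simps)
    then show False using bnd[of n] by linarith
  qed
qed

end

lemma rel_uniform:
  assumes na: "nonatomic M" and A: "A \<in> sets M"
  shows "\<exists>U\<in>borel_measurable M. (\<forall>x. 0 \<le> U x \<and> U x \<le> 1) \<and>
     (\<forall>t. 0 \<le> t \<longrightarrow> t \<le> 1 \<longrightarrow> measure M {x\<in>A. U x \<le> t} = t * measure M A)"
proof -
  define H where "H C = (SOME B. B \<in> sets M \<and> B \<subseteq> C \<and> measure M B = measure M C / 2)" for C
  have H: "H C \<in> sets M \<and> H C \<subseteq> C \<and> measure M (H C) = measure M C / 2" if "C \<in> sets M" for C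
  proof -
    have "\<exists>B. B \<in> sets M \<and> B \<subseteq> C \<and> measure M B = measure M C / 2"
      using sierpinski[OF na that, of "measure M C / 2"] by auto
    then show ?thesis unfolding H_def by (rule someI_ex)
  qed
  show ?thesis
    using U_meas[OF H A] U_01[OF H A] U_measure[OF H A] by blast
qed

end

context prob_space begin

lemma measure_zero_sub: "S \<subseteq> N \<Longrightarrow> N \<in> sets M \<Longrightarrow> measure M N = 0 \<Longrightarrow> measure M S = 0"
  by (metis finite_measure_mono measure_nonneg order_antisym)

lemma uniform_E:
  assumes na: "nonatomic M" and E: "E \<in> sets M"
  shows "\<exists>U\<in>borel_measurable M. (\<forall>x. 0 \<le> U x \<and> U x \<le> 1) \<and> (\<forall>x\<in>E. U x \<le> measure M E) \<and>
     (\<forall>t. 0 \<le> t \<longrightarrow> t \<le> 1 \<longrightarrow> measure M {x\<in>space M. U x \<le> t} = t)"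
proof -
  let ?F = "space M - E"
  have F: "?F \<in> sets M" using E by auto
  obtain U1 where U1: "U1 \<in> borel_measurable M" "\<And>x. 0 \<le> U1 x \<and> U1 x \<le> 1"
    "\<And>t. 0 \<le> t \<Longrightarrow> t \<le> 1 \<Longrightarrow> measure M {x\<in>E. U1 x \<le> t} = t * measure M E"
    using rel_uniform[OF na E] by blast
  obtain U2 where U2: "U2 \<in> borel_measurable M" "\<And>x. 0 \<le> U2 x \<and> U2 x \<le> 1"
    "\<And>t. 0 \<le> t \<Longrightarrow> t \<le> 1 \<Longrightarrow> measure M {x\<in>?F. U2 x \<le> t} = t * measure M ?F"
    using rel_uniform[OF na F] by blast
  define e where "e = measure M E"
  define f where "f = measure M ?F"
  have ef: "e + f = 1" "0 \<le> e" "0 \<le> f" unfolding e_def f_def using prob_compl[OF E] by auto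
  define U where "U x = (if x \<in> E then e * U1 x else e + f * U2 x)" for x
  have Um: "U \<in> borel_measurable M" unfolding U_def using U1(1) U2(1) E by measurable
  have U01: "0 \<le> U x \<and> U x \<le> 1" for x
  proof -
    have "e * U1 x \<le> e * 1" "f * U2 x \<le> f * 1" using U1(2) U2(2) ef by (intro mult_left_mono; auto)+
    then show ?thesis using U1(2)[of x] U2(2)[of x] ef by (auto simp: U_def)
  qed
  have UE: "\<forall>x\<in>E. U x \<le> measure M E"
  proof
    fix x assume "x \<in> E"
    have "e * U1 x \<le> e * 1" using U1(2) ef by (intro mult_left_mono) auto
    then show "U x \<le> measure M E" using \<open>x\<in>E\<close> by (simp add: U_def e_def)
  qed
  have meas: "measure M {x\<in>space M. U x \<le> t} = t" if t: "0 \<le> t" "t \<le> 1" for t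
  proof -
    have s1: "{x\<in>E. e * U1 x \<le> t} \<in> sets M" using U1(1) E by measurable
    have s2: "{x\<in>?F. e + f * U2 x \<le> t} \<in> sets M" using U2(1) E by measurable
    have split: "{x\<in>space M. U x \<le> t} = {x\<in>E. e * U1 x \<le> t} \<union> {x\<in>?F. e + f * U2 x \<le> t}"
      using sets.sets_into_space[OF E] by (auto simp: U_def)
    have m1: "measure M {x\<in>E. e * U1 x \<le> t} = min t e"
    proof (cases "e = 0")
      case True
      then show ?thesis using measure_zero_sub[of "{x\<in>E. e * U1 x \<le> t}" E] E t by (auto simp: e_def)
    next
      case False
      then have e0: "e > 0" using ef by auto
      show ?thesis
      proof (cases "e \<le> t")
        case True
        have "{x\<in>E. e * U1 x \<le> t} = E"
        proof -
          have "e * U1 x \<le> t" for x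
          proof -
            have "e * U1 x \<le> e * 1" using U1(2) ef by (intro mult_left_mono) auto
            then show ?thesis using True by simp
          qed
          then show ?thesis by auto
        qed
        then show ?thesis using True by (simp add: e_def)
      next
        case False
        have "{x\<in>E. e * U1 x \<le> t} = {x\<in>E. U1 x \<le> t / e}" using e0 by (auto simp: field_simps)
        then show ?thesis using U1(3)[of "t/e"] e0 t False by (simp add: e_def)
      qed
    qed
    have m2: "measure M {x\<in>?F. e + f * U2 x \<le> t} = max 0 (t - e)"
    proof (cases "t < e")
      case True
      have emp: "{x\<in>?F. e + f * U2 x \<le> t} = {}"
      proof -
        have "0 \<le> f * U2 x" for x using U2(2) ef by auto
        then have "\<not> e + f * U2 x \<le> t" for x using True by (smt (verit))
        then show ?thesis by blast
      qed
      show ?thesis unfolding emp using True by simp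
    next
      case False
      show ?thesis
      proof (cases "f = 0")
        case True
        then show ?thesis using measure_zero_sub[of "{x\<in>?F. e + f * U2 x \<le> t}" ?F] F t ef False
          by (auto simp: f_def)
      next
        case f0: False
        then have f0: "f > 0" using ef by auto
        have "{x\<in>?F. e + f * U2 x \<le> t} = {x\<in>?F. U2 x \<le> (t - e) / f}" using f0 by (auto simp: field_simps)
        moreover have "(t - e) / f \<le> 1" using f0 t ef by (simp add: field_simps)
        ultimately show ?thesis using U2(3)[of "(t - e)/f"] f0 t False by (simp add: f_def)
      qed
    qed
    have "measure M {x\<in>space M. U x \<le> t} = measure M {x\<in>E. e * U1 x \<le> t} + measure M {x\<in>?F. e + f * U2 x \<le> t}"
      unfolding split using s1 s2 by (intro finite_measure_Union) auto
    then show ?thesis using m1 m2 by (simp add: min_def max_def)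
  qed
  show ?thesis using Um U01 UE meas by blast
qed

lemma construct:
  fixes W :: "'a \<Rightarrow> real"
  assumes na: "nonatomic M" and W: "W \<in> borel_measurable M" and E: "E \<in> sets M"
    and le: "measure M E \<le> measure M {x\<in>space M. W x \<le> 0}"
  shows "\<exists>W'\<in>borel_measurable M. distr M borel W' = distr M borel W \<and> (\<forall>x\<in>E. W' x \<le> 0)"
proof -
  obtain U where U: "U \<in> borel_measurable M" "\<And>x. 0 \<le> U x \<and> U x \<le> 1" "\<And>x. x\<in>E \<Longrightarrow> U x \<le> measure M E"
    "\<And>t. 0 \<le> t \<Longrightarrow> t \<le> 1 \<Longrightarrow> measure M {x\<in>space M. U x \<le> t} = t"
    using uniform_E[OF na E] by blast
  define \<mu> where "\<mu> = distr M borel W"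
  have rd: "real_distribution \<mu>" unfolding \<mu>_def using W by auto
  interpret mu: cdf_distribution \<mu> using rd unfolding cdf_distribution_def .
  define I where "I \<omega> = Inf {x. \<omega> \<le> cdf \<mu> x}" for \<omega>
  have pinv: "\<omega> \<le> cdf \<mu> x \<longleftrightarrow> I \<omega> \<le> x" if "0 < \<omega>" "\<omega> < 1" for \<omega> x
    unfolding I_def by (rule mu.pseudoinverse[OF that])
  have Im: "I \<in> borel_measurable (restrict_space borel {0<..<1})" unfolding I_def by (rule mu.measurable_CI)
  define g where "g u = indicator {0<..<1} u *\<^sub>R I u" for u :: real
  have gm: "g \<in> borel_measurable borel" using Im unfolding g_def
    by (subst (asm) borel_measurable_restrict_space_iff) auto
  have g_in: "0 < u \<Longrightarrow> u < 1 \<Longrightarrow> g u = I u" for u by (simp add: g_def)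
  have g_out: "\<not> (0 < u \<and> u < 1) \<Longrightarrow> g u = 0" for u by (simp add: g_def)
  define W' where "W' x = g (U x)" for x
  have W'm: "W' \<in> borel_measurable M" unfolding W'_def by (rule measurable_compose[OF U(1) gm])
  have Us: "{x\<in>space M. U x \<le> t} \<in> sets M" for t using U(1) by measurable
  have Ueq: "{x\<in>space M. U x = 1} \<in> sets M" using U(1) by measurable
  have U1: "measure M {x\<in>space M. U x = 1} = 0"
  proof -
    have le_eps: "measure M {x\<in>space M. U x = 1} \<le> \<epsilon>" if "0 < \<epsilon>" "\<epsilon> \<le> 1" for \<epsilon>
    proof -
      have "measure M {x\<in>space M. U x = 1} \<le> measure M ({x\<in>space M. U x \<le> 1} - {x\<in>space M. U x \<le> 1 - \<epsilon>})"
        using that Us by (intro finite_measure_mono) auto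
      also have "\<dots> = measure M {x\<in>space M. U x \<le> 1} - measure M {x\<in>space M. U x \<le> 1 - \<epsilon>}"
        using Us U(2) by (intro finite_measure_Diff) auto
      also have "\<dots> = \<epsilon>" using U(4)[of 1] U(4)[of "1-\<epsilon>"] that by simp
      finally show ?thesis .
    qed
    show ?thesis
    proof (rule ccontr)
      assume "measure M {x\<in>space M. U x = 1} \<noteq> 0"
      then have pos: "measure M {x\<in>space M. U x = 1} > 0" using measure_nonneg[of M] by (simp add: order_less_le)
      have "measure M {x\<in>space M. U x = 1} \<le> min (measure M {x\<in>space M. U x = 1} / 2) 1"
        using pos by (intro le_eps) auto
      then show False using pos by (simp add: min_def split: if_splits)
    qed
  qed
  have U0: "measure M {x\<in>space M. U x \<le> 0} = 0" using U(4)[of 0] by simp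
  have AEG: "AE x in M. 0 < U x \<and> U x < 1"
  proof -
    let ?N = "{x\<in>space M. U x \<le> 0} \<union> {x\<in>space M. U x = 1}"
    have Ns: "?N \<in> sets M" using Us Ueq by auto
    have pw: "(\<not> (0 < U x \<and> U x < 1)) \<longleftrightarrow> (U x \<le> 0 \<or> U x = 1)" for x using U(2)[of x] by (smt (verit))
    moreover have "{x\<in>space M. \<not> (0 < U x \<and> U x < 1)} = ?N" unfolding pw by blast
    moreover have "measure M ?N = 0"
    proof -
      have "measure M ?N \<le> measure M {x\<in>space M. U x \<le> 0} + measure M {x\<in>space M. U x = 1}"
        using Us Ueq by (intro measure_subadditive) auto
      then show ?thesis using U0 U1 measure_nonneg[of M ?N] by linarith
    qed
    ultimately show ?thesis using Ns by (subst AE_iff_measurable) (auto simp: emeasure_eq_measure)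
  qed
  have W's: "{x\<in>space M. W' x \<le> y} \<in> sets M" for y using W'm by measurable
  have cdfeq: "cdf (distr M borel W') y = cdf \<mu> y" for y
  proof -
    have "cdf (distr M borel W') y = measure M (W' -` {..y} \<inter> space M)"
      unfolding cdf_def by (rule measure_distr[OF W'm]) auto
    also have "W' -` {..y} \<inter> space M = {x\<in>space M. W' x \<le> y}" by auto
    also have "measure M {x\<in>space M. W' x \<le> y} = measure M {x\<in>space M. U x \<le> cdf \<mu> y}"
    proof (rule measure_eq_AE[OF _ W's Us])
      show "AE x in M. (x \<in> {x\<in>space M. W' x \<le> y}) = (x \<in> {x\<in>space M. U x \<le> cdf \<mu> y})"
        using AEG by eventually_elim (auto simp: W'_def g_in pinv)
    qed
    also have "\<dots> = cdf \<mu> y" using U(4) mu.cdf_nonneg mu.cdf_bounded_prob by auto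
    finally show ?thesis .
  qed
  have deq: "distr M borel W' = \<mu>"
    by (rule cdf_unique) (use W'm rd cdfeq in auto)
  have C0: "cdf \<mu> 0 = measure M {x\<in>space M. W x \<le> 0}"
  proof -
    have "cdf \<mu> 0 = measure M (W -` {..0} \<inter> space M)"
      unfolding cdf_def \<mu>_def by (rule measure_distr[OF W]) auto
    also have "W -` {..0} \<inter> space M = {x\<in>space M. W x \<le> 0}" by auto
    finally show ?thesis .
  qed
  have "\<forall>x\<in>E. W' x \<le> 0"
  proof
    fix x assume x: "x \<in> E"
    show "W' x \<le> 0"
    proof (cases "0 < U x \<and> U x < 1")
      case True
      have "U x \<le> cdf \<mu> 0" using U(3)[OF x] le C0 by linarith
      then show ?thesis using True pinv by (simp add: W'_def g_in)
    next
      case False then show ?thesis by (simp add: W'_def g_out)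
    qed
  qed
  then show ?thesis using W'm deq unfolding \<mu>_def by blast
qed

end

lemma same_law_AE:
  assumes "same_law M Y Z" "{y. P y} \<in> sets borel" "AE x in M. P (Z x)"
  shows "AE x in M. P (Y x)"
proof -
  have m: "Y \<in> borel_measurable M" "Z \<in> borel_measurable M" and d: "distr M borel Y = distr M borel Z"
    using assms(1) unfolding same_law_def by auto
  have "AE x in distr M borel Z. P x" using AE_distr_iff[OF m(2), of P] assms(2,3) by simp
  then have "AE x in distr M borel Y. P x" unfolding d .
  then show ?thesis using AE_distr_iff[OF m(1), of P] assms(2) by simp
qed

lemma same_law_measure:
  assumes "same_law M Y Z" "S \<in> sets borel"
  shows "measure M {x\<in>space M. Y x \<in> S} = measure M {x\<in>space M. Z x \<in> S}"
proof -
  have m: "Y \<in> borel_measurable M" "Z \<in> borel_measurable M" and d: "distr M borel Y = distr M borel Z"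
    using assms(1) unfolding same_law_def by auto
  have "measure M {x\<in>space M. Y x \<in> S} = measure (distr M borel Y) S"
    using measure_distr[OF m(1) assms(2)] by (simp add: vimage_def Int_def conj_commute)
  also have "\<dots> = measure (distr M borel Z) S" using d by simp
  also have "\<dots> = measure M {x\<in>space M. Z x \<in> S}"
    using measure_distr[OF m(2) assms(2)] by (simp add: vimage_def Int_def conj_commute)
  finally show ?thesis .
qed

lemma same_law_integral:
  assumes "same_law M Y Z" "integrable M Z"
  shows "integrable M Y \<and> integral\<^sup>L M Y = integral\<^sup>L M Z"
proof -
  have m: "Y \<in> borel_measurable M" "Z \<in> borel_measurable M" and d: "distr M borel Y = distr M borel Z"
    using assms(1) unfolding same_law_def by auto
  have "integrable (distr M borel Z) (\<lambda>x. x)" using integrable_distr_eq[OF m(2), of "\<lambda>x. x"] assms(2) by simp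
  then have "integrable (distr M borel Y) (\<lambda>x. x)" using d by simp
  then have i: "integrable M Y" using integrable_distr_eq[OF m(1), of "\<lambda>x. x"] by simp
  have "integral\<^sup>L M Y = integral\<^sup>L (distr M borel Y) (\<lambda>x. x)" using integral_distr[OF m(1), of "\<lambda>x. x"] by simp
  also have "\<dots> = integral\<^sup>L (distr M borel Z) (\<lambda>x. x)" using d by simp
  also have "\<dots> = integral\<^sup>L M Z" using integral_distr[OF m(2), of "\<lambda>x. x"] by simp
  finally show ?thesis using i by simp
qed

lemma Linf_mult_integrable:
  assumes "X \<in> Linf M" "integrable M Y"
  shows "integrable M (\<lambda>x. X x * Y x)"
proof -
  obtain K where K: "AE x in M. \<bar>X x\<bar> \<le> K" and Xm: "X \<in> borel_measurable M" using assms(1) unfolding Linf_def by auto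
  show ?thesis
  proof (rule Bochner_Integration.integrable_bound[where f="\<lambda>x. K * Y x"])
    show "integrable M (\<lambda>x. K * Y x)" using assms(2) by simp
    show "(\<lambda>x. X x * Y x) \<in> borel_measurable M" using Xm borel_measurable_integrable[OF assms(2)] by measurable
    show "AE x in M. norm (X x * Y x) \<le> norm (K * Y x)"
      using K by eventually_elim (auto simp: abs_mult intro!: mult_right_mono)
  qed
qed

context prob_space begin

lemma key_bound:
  fixes W V :: "'a \<Rightarrow> real"
  assumes Wm: "W \<in> borel_measurable M" and Vm: "V \<in> borel_measurable M"
    and W0: "AE x in M. 0 \<le> W x" and V0: "AE x in M. 0 \<le> V x"
    and a: "a > 0" and d: "\<delta> > 0" and int: "integrable M (\<lambda>x. W x * V x)"
  shows "a * \<delta> * (measure M {x\<in>space M. W x > a} - measure M {x\<in>space M. V x \<le> \<delta>}) \<le> integral\<^sup>L M (\<lambda>x. W x * V x)"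
proof -
  let ?S = "{x\<in>space M. a < W x \<and> \<delta> < V x}"
  have S: "?S \<in> sets M" using Wm Vm by measurable
  have s1a: "{x\<in>space M. W x > a} \<in> sets M" using Wm by measurable
  have s1b: "{x\<in>space M. V x \<le> \<delta>} \<in> sets M" using Vm by measurable
  note s1 = s1a s1b
  have "measure M {x\<in>space M. W x > a} \<le> measure M (?S \<union> {x\<in>space M. V x \<le> \<delta>})"
    using S s1 by (intro finite_measure_mono) auto
  also have "\<dots> \<le> measure M ?S + measure M {x\<in>space M. V x \<le> \<delta>}"
    using S s1 emeasure_finite by (intro measure_subadditive) auto
  finally have ms: "measure M {x\<in>space M. W x > a} - measure M {x\<in>space M. V x \<le> \<delta>} \<le> measure M ?S" by simp
  have "integral\<^sup>L M (\<lambda>x. (a * \<delta>) * indicator ?S x) \<le> integral\<^sup>L M (\<lambda>x. W x * V x)"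
  proof (rule integral_mono_AE)
    show "integrable M (\<lambda>x. (a * \<delta>) * indicator ?S x)" using S emeasure_finite[of ?S] by (intro integrable_mult_right integrable_real_indicator) (auto simp: less_top[symmetric])
    show "integrable M (\<lambda>x. W x * V x)" by (rule int)
    show "AE x in M. (a * \<delta>) * indicator ?S x \<le> W x * V x"
      using W0 V0
    proof eventually_elim
      case (elim x)
      show ?case
      proof (cases "x \<in> ?S")
        case True
        then have "a * \<delta> \<le> W x * V x" using a d by (intro mult_mono) auto
        then show ?thesis using True by simp
      next
        case False then show ?thesis using elim by simp
      qed
    qed
  qed
  moreover have "integral\<^sup>L M (\<lambda>x. (a * \<delta>) * indicator ?S x) = a * \<delta> * measure M ?S"
  proof -
    have "?S \<inter> space M = ?S" by auto
    then show ?thesis by simp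
  qed
  moreover have "a * \<delta> * (measure M {x\<in>space M. W x > a} - measure M {x\<in>space M. V x \<le> \<delta>}) \<le> a * \<delta> * measure M ?S"
    using ms a d by (intro mult_left_mono) auto
  ultimately show ?thesis by linarith
qed

end

theorem proposition7p1:
  fixes M Q :: "'a measure" and S0 :: real and ST :: "'a \<Rightarrow> real"
  assumes "prob_space M" and "nonatomic M"
    and "prob_space Q" and "sets Q = sets M" and "absolutely_continuous M Q"
    and "traded_asset M S0 ST" and "ST \<in> Linf M"
  shows "(\<forall>X\<in>Linf M. \<bar>rho (accQ M Q) S0 ST X\<bar> \<noteq> \<infinity>) \<longleftrightarrow>
         Inf {integral\<^sup>L Q Z | Z. same_law M Z ST} > 0"
proof -
  interpret P: prob_space M by fact
  interpret Qp: prob_space Q by fact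
  note na = assms(2)
  have sQ: "sets Q = sets M" by fact
  have ac: "absolutely_continuous M Q" by fact
  from assms(6) have S0: "S0 > 0" and STm: "ST \<in> borel_measurable M" and ST0: "AE x in M. ST x \<ge> 0"
    unfolding traded_asset_def by auto
  from assms(7) obtain Kst where Kst: "AE x in M. \<bar>ST x\<bar> \<le> Kst" unfolding Linf_def by auto
  define D where "D = dens M Q"
  have Dm: "D \<in> borel_measurable M" unfolding D_def dens_def by measurable
  have D0: "\<And>x. 0 \<le> D x" unfolding D_def dens_def by simp
  have sfQ: "sigma_finite_measure Q" by (rule Qp.sigma_finite_measure_axioms)
  have DQ: "\<And>f. f \<in> borel_measurable M \<Longrightarrow> integral\<^sup>L Q f = (\<integral>x. D x * f x \<partial>M)"
    unfolding D_def dens_def using P.RN_deriv_integral[OF sfQ ac sQ] by simp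
  have Dint: "integrable M D"
    using P.RN_deriv_integrable[OF sfQ ac sQ, of "\<lambda>_. 1"] by (simp add: D_def dens_def)
  have D1: "integral\<^sup>L M D = 1" using DQ[of "\<lambda>_. 1"] Qp.prob_space by simp
  have Dsl: "same_law M D D" unfolding same_law_def using Dm by simp
  have STsl: "same_law M ST ST" unfolding same_law_def using STm by simp
  have b0: "{y::real. 0 \<le> y} \<in> sets borel"
  proof -
    have "{y\<in>space borel. (0::real) \<le> y} \<in> sets borel" by measurable
    then show ?thesis by simp
  qed
  have bK: "{y::real. \<bar>y\<bar> \<le> Kst} \<in> sets borel"
  proof -
    have "{y\<in>space borel. \<bar>y\<bar> \<le> (Kst::real)} \<in> sets borel" by measurable
    then show ?thesis by simp
  qed
  have Yp: "Y \<in> borel_measurable M \<and> (AE x in M. 0 \<le> Y x) \<and> integrable M Y \<and> integral\<^sup>L M Y = 1"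
    if "same_law M Y D" for Y
    using that same_law_AE[OF that b0] same_law_integral[OF that Dint] D1 D0
    unfolding same_law_def by auto
  have Zp: "Z \<in> borel_measurable M \<and> (AE x in M. 0 \<le> Z x) \<and> Z \<in> Linf M"
    if "same_law M Z ST" for Z
  proof -
    have m: "Z \<in> borel_measurable M" using that unfolding same_law_def by auto
    have "AE x in M. \<bar>Z x\<bar> \<le> Kst" using same_law_AE[OF that bK] Kst by simp
    then show ?thesis using m same_law_AE[OF that b0] ST0 unfolding Linf_def by auto
  qed
  have STY_int: "integrable M (\<lambda>x. ST x * Y x)" if "same_law M Y D" for Y
    using Linf_mult_integrable[OF assms(7)] Yp[OF that] by auto
  let ?L = "\<forall>X\<in>Linf M. \<bar>rho (accQ M Q) S0 ST X\<bar> \<noteq> \<infinity>"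
  let ?S = "{integral\<^sup>L Q Z | Z. same_law M Z ST}"
  let ?R = "Inf ?S > 0"
  have Sne: "?S \<noteq> {}" using STsl by auto
  define good where "good \<longleftrightarrow> (\<exists>a>0. \<exists>\<delta>>0. measure M {x\<in>space M. D x \<le> \<delta>} < measure M {x\<in>space M. ST x > a})"
  have case_good: "?L \<and> ?R" if good
  proof -
    obtain a \<delta> where a: "a > 0" and d: "\<delta> > 0" and lt: "measure M {x\<in>space M. D x \<le> \<delta>} < measure M {x\<in>space M. ST x > a}"
      using \<open>good\<close> unfolding good_def by auto
    define c where "c = a * \<delta> * (measure M {x\<in>space M. ST x > a} - measure M {x\<in>space M. D x \<le> \<delta>})"
    have c0: "c > 0" unfolding c_def using a d lt by simp
    have G1: "c \<le> (\<integral>x. ST x * Y x \<partial>M)" if Y: "same_law M Y D" for Y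
    proof -
      have "measure M {x\<in>space M. Y x \<in> {..\<delta>}} = measure M {x\<in>space M. D x \<in> {..\<delta>}}"
        by (rule same_law_measure[OF Y]) simp
      then have "measure M {x\<in>space M. Y x \<le> \<delta>} = measure M {x\<in>space M. D x \<le> \<delta>}" by simp
      moreover have "Y \<in> borel_measurable M" "AE x in M. 0 \<le> Y x" using Yp[OF Y] by auto
      ultimately show ?thesis using P.key_bound[of ST Y a \<delta>, OF STm _ ST0 _ a d STY_int[OF Y]]
        by (simp add: c_def)
    qed
    have G2: "c \<le> integral\<^sup>L Q Z" if Z: "same_law M Z ST" for Z
    proof -
      have "measure M {x\<in>space M. Z x \<in> {a<..}} = measure M {x\<in>space M. ST x \<in> {a<..}}"
        by (rule same_law_measure[OF Z]) simp
      then have e: "measure M {x\<in>space M. Z x > a} = measure M {x\<in>space M. ST x > a}" by simp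
      have int: "integrable M (\<lambda>x. Z x * D x)" using Linf_mult_integrable[OF _ Dint] Zp[OF Z] by auto
      have "Z \<in> borel_measurable M" "AE x in M. 0 \<le> Z x" using Zp[OF Z] by auto
      moreover have "AE x in M. 0 \<le> D x" using D0 by simp
      ultimately have "c \<le> (\<integral>x. Z x * D x \<partial>M)"
        using P.key_bound[of Z D a \<delta>, OF _ Dm _ _ a d int] e by (simp add: c_def)
      also have "\<dots> = integral\<^sup>L Q Z" using DQ[of Z] Zp[OF Z] by (simp add: mult.commute)
      finally show ?thesis .
    qed
    have R: ?R
    proof -
      have "c \<le> Inf ?S" using Sne G2 by (intro cInf_greatest) auto
      then show ?thesis using c0 by simp
    qed
    have L: ?L
    proof
      fix X assume X: "X \<in> Linf M"
      then obtain K0 where K0: "AE x in M. \<bar>X x\<bar> \<le> K0" and Xm: "X \<in> borel_measurable M" unfolding Linf_def by auto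
      define K where "K = max K0 0"
      have K: "AE x in M. \<bar>X x\<bar> \<le> K" "K \<ge> 0" using K0 unfolding K_def by (auto elim: eventually_mono)
      define m0 where "m0 = S0 * K / c"
      have mem: "(\<lambda>x. X x + m0 / S0 * ST x) \<in> accQ M Q"
      proof -
        have lin: "(\<lambda>x. X x + m0 / S0 * ST x) \<in> Linf M"
        proof -
          have "AE x in M. \<bar>X x + m0 / S0 * ST x\<bar> \<le> K + \<bar>m0 / S0\<bar> * Kst"
            using K(1) Kst
          proof eventually_elim
            case (elim x)
            have "\<bar>X x + m0 / S0 * ST x\<bar> \<le> \<bar>X x\<bar> + \<bar>m0 / S0\<bar> * \<bar>ST x\<bar>"
              by (metis abs_mult abs_triangle_ineq)
            also have "\<dots> \<le> K + \<bar>m0 / S0\<bar> * Kst" using elim by (intro add_mono mult_left_mono) auto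
            finally show ?case .
          qed
          then show ?thesis unfolding Linf_def using Xm STm by auto
        qed
        have "0 \<le> (\<integral>x. (X x + m0 / S0 * ST x) * Y x \<partial>M)" if Y: "same_law M Y D" for Y
        proof -
          note y = Yp[OF Y]
          have iXY: "integrable M (\<lambda>x. X x * Y x)" using Linf_mult_integrable[OF X] y by auto
          have iSY: "integrable M (\<lambda>x. ST x * Y x)" by (rule STY_int[OF Y])
          have "(\<lambda>x. (X x + m0 / S0 * ST x) * Y x) = (\<lambda>x. X x * Y x + m0 / S0 * (ST x * Y x))"
            by (auto simp: fun_eq_iff algebra_simps)
          then have eq: "(\<integral>x. (X x + m0 / S0 * ST x) * Y x \<partial>M) = (\<integral>x. X x * Y x \<partial>M) + m0 / S0 * (\<integral>x. ST x * Y x \<partial>M)"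
            using iXY iSY by simp
          have "(\<integral>x. - K * Y x \<partial>M) \<le> (\<integral>x. X x * Y x \<partial>M)"
          proof (rule integral_mono_AE)
            show "integrable M (\<lambda>x. - K * Y x)" using y by simp
            show "integrable M (\<lambda>x. X x * Y x)" by (rule iXY)
            have Y0: "AE x in M. 0 \<le> Y x" using y by auto
            show "AE x in M. - K * Y x \<le> X x * Y x" using K(1) Y0
            proof eventually_elim
              case (elim x)
              then have "- K \<le> X x" by linarith
              then show ?case using elim(2) by (rule mult_right_mono)
            qed
          qed
          then have a1: "- K \<le> (\<integral>x. X x * Y x \<partial>M)" using y by simp
          have mK: "m0 / S0 = K / c" unfolding m0_def using S0 by simp
          have "K / c * c \<le> K / c * (\<integral>x. ST x * Y x \<partial>M)"
            using G1[OF Y] K(2) c0 by (intro mult_left_mono) auto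
          then have a2: "K \<le> m0 / S0 * (\<integral>x. ST x * Y x \<partial>M)" using c0 mK by simp
          show ?thesis unfolding eq using a1 a2 by linarith
        qed
        then show ?thesis unfolding accQ_def D_def[symmetric] using lin by auto
      qed
      define e where "e = (\<integral>x. ST x * D x \<partial>M)"
      have e0: "e > 0" using G1[OF Dsl] c0 unfolding e_def by simp
      define m1 where "m1 = - S0 * (\<integral>x. X x * D x \<partial>M) / e"
      have low: "m1 \<le> m" if m: "(\<lambda>x. X x + m / S0 * ST x) \<in> accQ M Q" for m
      proof -
        have "0 \<le> (\<integral>x. (X x + m / S0 * ST x) * D x \<partial>M)" using m Dsl unfolding accQ_def D_def[symmetric] by auto
        moreover have iXD: "integrable M (\<lambda>x. X x * D x)" using Linf_mult_integrable[OF X Dint] .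
        moreover have iSD: "integrable M (\<lambda>x. ST x * D x)" by (rule STY_int[OF Dsl])
        moreover have "(\<lambda>x. (X x + m / S0 * ST x) * D x) = (\<lambda>x. X x * D x + m / S0 * (ST x * D x))"
          by (auto simp: fun_eq_iff algebra_simps)
        ultimately have "0 \<le> (\<integral>x. X x * D x \<partial>M) + m / S0 * e" unfolding e_def by simp
        then have "0 \<le> S0 * ((\<integral>x. X x * D x \<partial>M) + m / S0 * e)" using S0 by simp
        then have "- S0 * (\<integral>x. X x * D x \<partial>M) \<le> m * e" using S0 by (simp add: algebra_simps)
        then show ?thesis unfolding m1_def by (subst pos_divide_le_eq[OF e0]) simp
      qed
      have up: "rho (accQ M Q) S0 ST X \<le> ereal m0"
        unfolding rho_def using mem by (intro Inf_lower) auto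
      have lo: "ereal m1 \<le> rho (accQ M Q) S0 ST X"
        unfolding rho_def using low by (intro Inf_greatest) auto
      show "\<bar>rho (accQ M Q) S0 ST X\<bar> \<noteq> \<infinity>"
        using up lo by (cases "rho (accQ M Q) S0 ST X") auto
    qed
    show ?thesis using L R by blast
  qed
  have case_bad: "\<not> ?L \<and> \<not> ?R" if "\<not> good"
  proof -
    have nb: "measure M {x\<in>space M. ST x > a} \<le> measure M {x\<in>space M. D x \<le> \<delta>}" if "a > 0" "\<delta> > 0" for a \<delta>
      using \<open>\<not> good\<close> that unfolding good_def by (meson not_le)
    have lim1: "measure M {x\<in>space M. ST x > a} \<le> measure M {x\<in>space M. D x \<le> 0}" if a: "a > 0" for a
    proof -
      define A where "A n = {x\<in>space M. D x \<le> inverse (real (Suc n))}" for n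
      have Asets: "range A \<subseteq> sets M" unfolding A_def using Dm by auto
      have Adec: "decseq A" unfolding A_def decseq_def
        by (auto elim!: order_trans intro!: le_imp_inverse_le)
      have Aint: "(\<Inter>n. A n) = {x\<in>space M. D x \<le> 0}"
      proof (intro equalityI subsetI)
        fix x assume x: "x \<in> (\<Inter>n. A n)"
        show "x \<in> {x\<in>space M. D x \<le> 0}"
        proof (rule ccontr)
          assume "x \<notin> {x\<in>space M. D x \<le> 0}"
          then have "D x > 0" "x \<in> space M" using x unfolding A_def by auto
          then obtain n where n: "inverse (real (Suc n)) < D x" using reals_Archimedean by blast
          have "x \<in> A n" using x by blast
          then show False using n unfolding A_def by auto
        qed
      next
        fix x assume "x \<in> {x\<in>space M. D x \<le> 0}"
        then show "x \<in> (\<Inter>n. A n)" unfolding A_def by (auto intro: order_trans[of _ 0])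
      qed
      have "(\<lambda>n. measure M (A n)) \<longlonglongrightarrow> measure M {x\<in>space M. D x \<le> 0}"
        using P.finite_Lim_measure_decseq[OF Asets Adec] unfolding Aint .
      then show ?thesis
        by (rule LIMSEQ_le_const) (auto simp: A_def intro!: nb a)
    qed
    have mST: "measure M {x\<in>space M. ST x > 0} \<le> measure M {x\<in>space M. D x \<le> 0}"
    proof -
      define B where "B n = {x\<in>space M. ST x > inverse (real (Suc n))}" for n
      have Bsets: "range B \<subseteq> sets M" unfolding B_def using STm by auto
      have Binc: "incseq B" unfolding incseq_def
      proof (intro allI impI subsetI)
        fix m n x assume mn: "m \<le> n" and x: "x \<in> B m"
        have le: "inverse (real (Suc n)) \<le> inverse (real (Suc m))" using mn by (intro le_imp_inverse_le) auto
        from x have "x \<in> space M" "inverse (real (Suc m)) < ST x" unfolding B_def by auto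
        then have "x \<in> space M" "inverse (real (Suc n)) < ST x" using order.strict_trans1[OF le] by auto
        then show "x \<in> B n" unfolding B_def by blast
      qed
      have Bun: "(\<Union>n. B n) = {x\<in>space M. ST x > 0}"
      proof (intro equalityI subsetI)
        fix x assume "x \<in> (\<Union>n. B n)"
        then show "x \<in> {x\<in>space M. ST x > 0}" unfolding B_def by (auto intro: order.strict_trans[rotated])
      next
        fix x assume x: "x \<in> {x\<in>space M. ST x > 0}"
        then obtain n where "inverse (real (Suc n)) < ST x" using reals_Archimedean by blast
        then show "x \<in> (\<Union>n. B n)" using x unfolding B_def by auto
      qed
      have "(\<lambda>n. measure M (B n)) \<longlonglongrightarrow> measure M {x\<in>space M. ST x > 0}"
        using Lim_measure_incseq[OF Bsets Binc] unfolding Bun by simp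
      then show ?thesis
        by (rule LIMSEQ_le_const2) (auto simp: B_def intro!: lim1)
    qed
    have D0s: "{x\<in>space M. D x \<le> 0} \<in> sets M" using Dm by measurable
    have ST0s: "{x\<in>space M. ST x > 0} \<in> sets M" using STm by measurable
    have notR: "\<not> ?R"
    proof -
      let ?E = "{x\<in>space M. D x > 0}"
      have Es: "?E \<in> sets M" using Dm by measurable
      have "?E = space M - {x\<in>space M. D x \<le> 0}" by auto
      then have mE: "measure M ?E = 1 - measure M {x\<in>space M. D x \<le> 0}" using P.prob_compl[OF D0s] by simp
      have "{x\<in>space M. ST x \<le> 0} = space M - {x\<in>space M. ST x > 0}" by auto
      then have mS: "measure M {x\<in>space M. ST x \<le> 0} = 1 - measure M {x\<in>space M. ST x > 0}"
        using P.prob_compl[OF ST0s] by simp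
      obtain Z where Zm: "Z \<in> borel_measurable M" and Zd: "distr M borel Z = distr M borel ST"
        and ZE: "\<forall>x\<in>?E. Z x \<le> 0"
        using P.construct[OF na STm Es] mE mS mST by auto
      have Zsl: "same_law M Z ST" unfolding same_law_def using Zm STm Zd by simp
      have Z0: "AE x in M. 0 \<le> Z x" using Zp[OF Zsl] by auto
      have "AE x in M. D x * Z x = 0"
        using Z0 AE_space
      proof eventually_elim
        case (elim x)
        show ?case
        proof (cases "D x > 0")
          case True
          then have "Z x \<le> 0" using ZE elim by auto
          then show ?thesis using elim by auto
        next
          case False then show ?thesis using D0[of x] by auto
        qed
      qed
      then have "(\<integral>x. D x * Z x \<partial>M) = (\<integral>x. 0 \<partial>M)"
        using Zm Dm by (intro integral_cong_AE) auto
      then have "integral\<^sup>L Q Z = 0" using DQ[OF Zm] by simp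
      then have "0 \<in> ?S" using Zsl by force
      moreover have "bdd_below ?S"
      proof (rule bdd_belowI[of _ 0])
        fix v assume "v \<in> ?S"
        then obtain Z' where Z': "same_law M Z' ST" "v = integral\<^sup>L Q Z'" by auto
        have "0 \<le> (\<integral>x. D x * Z' x \<partial>M)"
          using Zp[OF Z'(1)] D0 by (intro integral_nonneg_AE) (auto elim: eventually_mono)
        then show "0 \<le> v" using Z' DQ Zp[OF Z'(1)] by simp
      qed
      ultimately have "Inf ?S \<le> 0" by (intro cInf_lower2[of 0]) auto
      then show ?thesis by simp
    qed
    have notL: "\<not> ?L"
    proof -
      let ?E = "{x\<in>space M. ST x > 0}"
      obtain Y where Ym: "Y \<in> borel_measurable M" and Yd: "distr M borel Y = distr M borel D"
        and YE: "\<forall>x\<in>?E. Y x \<le> 0"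
        using P.construct[OF na Dm ST0s] mST by auto
      have Ysl: "same_law M Y D" unfolding same_law_def using Ym Dm Yd by simp
      note y = Yp[OF Ysl]
      have Y0: "AE x in M. 0 \<le> Y x" using y by auto
      have AEz: "AE x in M. ST x * Y x = 0"
        using Y0 ST0 AE_space
      proof eventually_elim
        case (elim x)
        show ?case
        proof (cases "ST x > 0")
          case True
          then have "Y x \<le> 0" using YE elim by auto
          then show ?thesis using elim by auto
        next
          case False then show ?thesis using elim by auto
        qed
      qed
      have Xl: "(\<lambda>_. -1::real) \<in> Linf M" unfolding Linf_def by auto
      have empty: "{m. (\<lambda>x. (\<lambda>_. -1::real) x + m / S0 * ST x) \<in> accQ M Q} = {}"
      proof (intro equalityI subsetI)
        fix m assume "m \<in> {m. (\<lambda>x. (\<lambda>_. -1::real) x + m / S0 * ST x) \<in> accQ M Q}"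
        then have "0 \<le> (\<integral>x. (-1 + m / S0 * ST x) * Y x \<partial>M)" using Ysl unfolding accQ_def D_def[symmetric] by auto
        moreover have "(\<integral>x. (-1 + m / S0 * ST x) * Y x \<partial>M) = (\<integral>x. - Y x \<partial>M)"
        proof (rule integral_cong_AE)
          show "(\<lambda>x. (-1 + m / S0 * ST x) * Y x) \<in> borel_measurable M" using Ym STm by measurable
          show "(\<lambda>x. - Y x) \<in> borel_measurable M" using Ym by measurable
          show "AE x in M. (-1 + m / S0 * ST x) * Y x = - Y x"
            using AEz by eventually_elim (auto simp: algebra_simps)
        qed
        moreover have "(\<integral>x. - Y x \<partial>M) = -1" using y by simp
        ultimately show "m \<in> {}" by simp
      qed auto
      have "rho (accQ M Q) S0 ST (\<lambda>_. -1) = \<infinity>"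
        unfolding rho_def empty by (simp add: top_ereal_def)
      then show ?thesis using Xl by force
    qed
    show ?thesis using notL notR by blast
  qed
  show ?thesis using case_good case_bad by (cases good) auto
qed

end
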